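(* The variety $\mathbf{K}_2$ is not locally finite; in fact its free algebra on one generator is infinite.
   Context: A pseudocomplemented de Morgan algebra is $(L;\wedge,\vee,{}^\ast,{}^\prime,0,1)$ with bounded distributive lattice reduct, pseudocomplement ${}^\ast$ and de Morgan involution ${}^\prime$. With $x^{0(\prime\ast)}=x$, $x^{(k+1)(\prime\ast)}=((x^{k(\prime\ast)})')^\ast$, $\mathbf{K}_2$ is the variety of such algebras satisfying $x\wedge x^{\prime\ast\prime}\le y\vee y^\ast$ (regularity), $x\wedge x'\le y\vee y'$ (Kleene), and $(x\wedge x^{\prime\ast})^{2(\prime\ast)}=(x\wedge x^{\prime\ast})^{3(\prime\ast)}$ (range $2$). *)

theory Defs
  imports Main
begin

text \<open>Algebras of signature (meet, join, pseudocomplement, de Morgan negation, 0, 1),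
  given with an explicit carrier set.\<close>
record 'a pmda =
  carrier :: "'a set"
  mt :: "'a \<Rightarrow> 'a \<Rightarrow> 'a"
  jn :: "'a \<Rightarrow> 'a \<Rightarrow> 'a"
  st :: "'a \<Rightarrow> 'a"
  pr :: "'a \<Rightarrow> 'a"
  bot :: 'a
  top :: 'a

definition leq :: "('a, 'b) pmda_scheme \<Rightarrow> 'a \<Rightarrow> 'a \<Rightarrow> bool" where
  "leq A x y \<longleftrightarrow> mt A x y = x"

definition pst :: "('a, 'b) pmda_scheme \<Rightarrow> nat \<Rightarrow> 'a \<Rightarrow> 'a" where
  "pst A k = (st A \<circ> pr A) ^^ k"

definition is_pmda :: "('a, 'b) pmda_scheme \<Rightarrow> bool" where
  "is_pmda A \<longleftrightarrow>
    (let C = carrier A in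
     bot A \<in> C \<and> top A \<in> C \<and>
     (\<forall>x\<in>C. \<forall>y\<in>C. mt A x y \<in> C \<and> jn A x y \<in> C) \<and>
     (\<forall>x\<in>C. st A x \<in> C \<and> pr A x \<in> C) \<and>
     \<comment> \<open>bounded distributive lattice\<close>
     (\<forall>x\<in>C. \<forall>y\<in>C. \<forall>z\<in>C.
        mt A x (mt A y z) = mt A (mt A x y) z \<and>
        jn A x (jn A y z) = jn A (jn A x y) z \<and>
        mt A x (jn A y z) = jn A (mt A x y) (mt A x z)) \<and>
     (\<forall>x\<in>C. \<forall>y\<in>C.
        mt A x y = mt A y x \<and> jn A x y = jn A y x \<and>
        mt A x (jn A x y) = x \<and> jn A x (mt A x y) = x) \<and>
     (\<forall>x\<in>C. jn A x (bot A) = x \<and> mt A x (top A) = x) \<and>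
     \<comment> \<open>pseudocomplement\<close>
     (\<forall>x\<in>C. \<forall>y\<in>C. leq A y (st A x) \<longleftrightarrow> mt A x y = bot A) \<and>
     \<comment> \<open>de Morgan involution\<close>
     (\<forall>x\<in>C. pr A (pr A x) = x) \<and>
     (\<forall>x\<in>C. \<forall>y\<in>C. pr A (jn A x y) = mt A (pr A x) (pr A y)))"

definition is_K2 :: "('a, 'b) pmda_scheme \<Rightarrow> bool" where
  "is_K2 A \<longleftrightarrow> is_pmda A \<and>
    (\<forall>x\<in>carrier A. \<forall>y\<in>carrier A.
       leq A (mt A x (pr A (st A (pr A x)))) (jn A y (st A y))) \<and>
    (\<forall>x\<in>carrier A. \<forall>y\<in>carrier A.
       leq A (mt A x (pr A x)) (jn A y (pr A y))) \<and>
    (\<forall>x\<in>carrier A.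
       pst A 2 (mt A x (st A (pr A x))) = pst A 3 (mt A x (st A (pr A x))))"

datatype trm = Var | Zero | One | Meet trm trm | Join trm trm | Star trm | Prime trm

primrec eval :: "('a, 'b) pmda_scheme \<Rightarrow> 'a \<Rightarrow> trm \<Rightarrow> 'a" where
  "eval A a Var = a"
| "eval A a Zero = bot A"
| "eval A a One = top A"
| "eval A a (Meet s t) = mt A (eval A a s) (eval A a t)"
| "eval A a (Join s t) = jn A (eval A a s) (eval A a t)"
| "eval A a (Star s) = st A (eval A a s)"
| "eval A a (Prime s) = pr A (eval A a s)"

text \<open>Identity s = t holds in K2. Algebras are taken with carriers inside nat;
  since the one-generated free algebra is countable, this captures exactly the
  identities of the variety.\<close>
definition K2_eq :: "trm \<Rightarrow> trm \<Rightarrow> bool" where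
  "K2_eq s t \<longleftrightarrow>
    (\<forall>A :: nat pmda. is_K2 A \<longrightarrow> (\<forall>a\<in>carrier A. eval A a s = eval A a t))"

definition free_K2_1 :: "trm set set" where
  "free_K2_1 = UNIV // {(s, t). K2_eq s t}"

end

theory Submission
  imports Defs "HOL-Library.Countable"
begin

instance trm :: countable by countable_datatype

section \<open>Transfer of K2 along an injection onto nat\<close>

lemma pmda_closed:
  assumes "is_pmda P"
  shows "bot P \<in> carrier P" "top P \<in> carrier P"
    "\<And>x y. x \<in> carrier P \<Longrightarrow> y \<in> carrier P \<Longrightarrow> mt P x y \<in> carrier P"
    "\<And>x y. x \<in> carrier P \<Longrightarrow> y \<in> carrier P \<Longrightarrow> jn P x y \<in> carrier P"
    "\<And>x. x \<in> carrier P \<Longrightarrow> st P x \<in> carrier P"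
    "\<And>x. x \<in> carrier P \<Longrightarrow> pr P x \<in> carrier P"
  using assms unfolding is_pmda_def Let_def by blast+

lemma eval_in_carrier:
  assumes "is_pmda P" "a \<in> carrier P"
  shows "eval P a t \<in> carrier P"
  by (induction t) (auto intro: pmda_closed[OF assms(1)] assms(2))

definition tr :: "('a, 'b) pmda_scheme \<Rightarrow> 'a set \<Rightarrow> ('a \<Rightarrow> nat) \<Rightarrow> nat pmda" where
  "tr P S h = \<lparr>carrier = h ` S,
     mt = (\<lambda>m n. h (mt P (inv_into S h m) (inv_into S h n))),
     jn = (\<lambda>m n. h (jn P (inv_into S h m) (inv_into S h n))),
     st = (\<lambda>m. h (st P (inv_into S h m))),
     pr = (\<lambda>m. h (pr P (inv_into S h m))),
     bot = h (bot P), top = h (top P)\<rparr>"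

locale trloc =
  fixes P :: "('a, 'b) pmda_scheme" and S :: "'a set" and h :: "'a \<Rightarrow> nat"
  assumes inj: "inj_on h S"
    and clbot: "bot P \<in> S" and cltop: "top P \<in> S"
    and clmt: "\<And>x y. x \<in> S \<Longrightarrow> y \<in> S \<Longrightarrow> mt P x y \<in> S"
    and cljn: "\<And>x y. x \<in> S \<Longrightarrow> y \<in> S \<Longrightarrow> jn P x y \<in> S"
    and clst: "\<And>x. x \<in> S \<Longrightarrow> st P x \<in> S"
    and clpr: "\<And>x. x \<in> S \<Longrightarrow> pr P x \<in> S"
    and sub: "S \<subseteq> carrier P"
begin

abbreviation "A \<equiv> tr P S h"

lemma ops[simp]:
  "x \<in> S \<Longrightarrow> y \<in> S \<Longrightarrow> mt A (h x) (h y) = h (mt P x y)"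
  "x \<in> S \<Longrightarrow> y \<in> S \<Longrightarrow> jn A (h x) (h y) = h (jn P x y)"
  "x \<in> S \<Longrightarrow> st A (h x) = h (st P x)"
  "x \<in> S \<Longrightarrow> pr A (h x) = h (pr P x)"
  "bot A = h (bot P)" "top A = h (top P)" "carrier A = h ` S"
  using inj by (simp_all add: tr_def)

lemma heq[simp]: "x \<in> S \<Longrightarrow> y \<in> S \<Longrightarrow> h x = h y \<longleftrightarrow> x = y"
  using inj by (meson inj_on_eq_iff)

lemma leqA[simp]: "x \<in> S \<Longrightarrow> y \<in> S \<Longrightarrow> leq A (h x) (h y) \<longleftrightarrow> leq P x y"
  by (simp add: leq_def clmt)

lemma pstA[simp]: "x \<in> S \<Longrightarrow> pst A k (h x) = h (pst P k x)"
proof (induction k arbitrary: x)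
  case 0 then show ?case by (simp add: pst_def)
next
  case (Suc k)
  have "pst A (Suc k) (h x) = pst A k (st A (pr A (h x)))"
    by (simp only: pst_def funpow_Suc_right comp_apply)
  also have "\<dots> = h (pst P k (st P (pr P x)))" using Suc by (simp add: clst clpr)
  also have "\<dots> = h (pst P (Suc k) x)" by (simp only: pst_def funpow_Suc_right comp_apply)
  finally show ?case .
qed

lemma evalA: "x \<in> S \<Longrightarrow> eval A (h x) t = h (eval P x t) \<and> eval P x t \<in> S"
  by (induction t) (simp_all add: clbot cltop clmt cljn clst clpr)

lemma K2A:
  assumes K: "is_K2 P"
  shows "is_K2 A"
proof -
  have Pm: "is_pmda P" using K by (simp add: is_K2_def)
  have sc: "\<And>x. x \<in> S \<Longrightarrow> x \<in> carrier P" using sub by blast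
  note PP = Pm[unfolded is_pmda_def Let_def]
  have pm: "is_pmda A"
    unfolding is_pmda_def Let_def ops(7)
    apply (intro conjI ballI)
    apply (safe elim!: imageE)
    apply (simp_all only: ops clbot cltop clmt cljn clst clpr image_eqI heq leqA)
    using PP sc clbot cltop clmt cljn clst clpr
    apply blast+
    done
  have K3: "\<forall>x\<in>carrier P. \<forall>y\<in>carrier P. leq P (mt P x (pr P (st P (pr P x)))) (jn P y (st P y))"
    "\<forall>x\<in>carrier P. \<forall>y\<in>carrier P. leq P (mt P x (pr P x)) (jn P y (pr P y))"
    "\<forall>x\<in>carrier P. pst P 2 (mt P x (st P (pr P x))) = pst P 3 (mt P x (st P (pr P x)))"
    using K unfolding is_K2_def by blast+
  show ?thesis
    unfolding is_K2_def ops(7)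
    apply (intro conjI pm ballI)
    apply (safe elim!: imageE)
    apply (simp_all only: ops clbot cltop clmt cljn clst clpr heq leqA pstA)
    using K3 sc
    apply blast+
    apply (simp add: K3(3)[rule_format] sc)
    done
qed

end

section \<open>A concrete K2 algebra: pairs over the fan graph\<close>

definition adj :: "nat \<Rightarrow> nat \<Rightarrow> bool" where
  "adj i j \<longleftrightarrow> i = 0 \<or> j = 0 \<or> (i \<le> Suc j \<and> j \<le> Suc i)"

definition bx :: "nat set \<Rightarrow> nat set" where
  "bx T = {i. \<forall>j. adj i j \<longrightarrow> j \<in> T}"

lemma adj_refl: "adj i i" by (simp add: adj_def)
lemma adj_sym: "adj i j \<Longrightarrow> adj j i" by (auto simp: adj_def)
lemma adj0: "adj i 0" "adj 0 i" by (simp_all add: adj_def)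

lemma bx_sub: "bx T \<subseteq> T" using adj_refl by (auto simp: bx_def)
lemma bx_mono: "T \<subseteq> T' \<Longrightarrow> bx T \<subseteq> bx T'" by (auto simp: bx_def)
lemma bx_int: "bx (T \<inter> T') = bx T \<inter> bx T'" by (auto simp: bx_def)
lemma bx_no0: "0 \<notin> T \<Longrightarrow> bx T = {}" using adj0 by (auto simp: bx_def)
lemma bx_UNIV: "bx UNIV = UNIV" by (auto simp: bx_def)
lemma bx_0: "0 \<in> bx T \<longleftrightarrow> T = UNIV" using adj0 by (auto simp: bx_def)
lemma bx2: "bx (bx T) = (if T = UNIV then UNIV else {})"
  using bx_0 bx_no0 bx_UNIV by auto
lemma bx3: "bx (bx (bx T)) = bx (bx T)"
proof (cases "T = UNIV")
  case True then show ?thesis by (simp add: bx_UNIV)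
next
  case False
  then have "bx T \<noteq> UNIV" using bx_sub by blast
  then show ?thesis using False by (simp add: bx2 bx_no0)
qed

lemma bx_sing_compl: "bx (- {k}) = {i. \<not> adj i k}"
  by (auto simp: bx_def)

definition PA :: "(nat set \<times> nat set) pmda" where
  "PA = \<lparr>carrier = {p. snd p \<subseteq> bx (fst p)},
     mt = (\<lambda>p q. (fst p \<inter> fst q, snd p \<inter> snd q)),
     jn = (\<lambda>p q. (fst p \<union> fst q, snd p \<union> snd q)),
     st = (\<lambda>p. (- fst p, bx (- fst p))),
     pr = (\<lambda>p. (- snd p, - fst p)),
     bot = ({}, {}), top = (UNIV, UNIV)\<rparr>"

lemma PA_simps[simp]:
  "carrier PA = {p. snd p \<subseteq> bx (fst p)}"
  "mt PA p q = (fst p \<inter> fst q, snd p \<inter> snd q)"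
  "jn PA p q = (fst p \<union> fst q, snd p \<union> snd q)"
  "st PA p = (- fst p, bx (- fst p))"
  "pr PA p = (- snd p, - fst p)"
  "bot PA = ({}, {})" "top PA = (UNIV, UNIV)"
  by (simp_all add: PA_def)

lemma leq_PA: "leq PA p q \<longleftrightarrow> fst p \<subseteq> fst q \<and> snd p \<subseteq> snd q"
  by (cases p; cases q) (auto simp: leq_def)

lemma pr_closed: "U \<subseteq> bx V \<Longrightarrow> - V \<subseteq> bx (- U)"
  by (auto simp: bx_def dest: adj_sym)

lemma PA_pmda: "is_pmda PA"
  unfolding is_pmda_def Let_def
proof (intro conjI ballI)
  show "bot PA \<in> carrier PA" "top PA \<in> carrier PA" by (auto simp: bx_UNIV)
next
  fix x y assume x: "x \<in> carrier PA" and y: "y \<in> carrier PA"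
  show "mt PA x y \<in> carrier PA" using x y bx_int by auto
  show "jn PA x y \<in> carrier PA" using x y bx_mono[of "fst x" "fst x \<union> fst y"]
      bx_mono[of "fst y" "fst x \<union> fst y"] by auto
  show "mt PA x y = mt PA y x" "jn PA x y = jn PA y x" by auto
  show "mt PA x (jn PA x y) = x" "jn PA x (mt PA x y) = x" by auto
  show "pr PA (pr PA x) = x" by simp
  show "pr PA (jn PA x y) = mt PA (pr PA x) (pr PA y)" by auto
  show "leq PA y (st PA x) = (mt PA x y = bot PA)"
  proof
    assume "leq PA y (st PA x)"
    then have "fst y \<subseteq> - fst x" "snd y \<subseteq> bx (- fst x)" by (auto simp: leq_PA)
    moreover have "snd x \<subseteq> fst x" using x bx_sub by auto
    moreover have "bx (- fst x) \<subseteq> - fst x" using bx_sub by auto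
    ultimately have "fst x \<inter> fst y = {}" "snd x \<inter> snd y = {}" by blast+
    then show "mt PA x y = bot PA" by simp
  next
    assume "mt PA x y = bot PA"
    then have "fst x \<inter> fst y = {}" by simp
    then have "fst y \<subseteq> - fst x" by auto
    moreover have "snd y \<subseteq> bx (- fst x)" using y bx_mono[OF \<open>fst y \<subseteq> - fst x\<close>] by simp
    ultimately show "leq PA y (st PA x)" by (simp add: leq_PA)
  qed
next
  fix x assume x: "x \<in> carrier PA"
  show "st PA x \<in> carrier PA" by simp
  show "pr PA x \<in> carrier PA" using x pr_closed by simp
  show "jn PA x (bot PA) = x" "mt PA x (top PA) = x" by simp_all
next
  fix x y z
  show "mt PA x (mt PA y z) = mt PA (mt PA x y) z" "jn PA x (jn PA y z) = jn PA (jn PA x y) z"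
        "mt PA x (jn PA y z) = jn PA (mt PA x y) (mt PA x z)"
    by (simp_all add: Int_assoc Un_assoc Int_Un_distrib)
qed

lemma pst_PA: "pst PA k (U, bx U) = ((bx ^^ k) U, (bx ^^ (Suc k)) U)"
proof (induction k arbitrary: U)
  case 0 then show ?case by (simp add: pst_def)
next
  case (Suc k)
  have "pst PA (Suc k) (U, bx U) = pst PA k (st PA (pr PA (U, bx U)))"
    by (simp only: pst_def funpow_Suc_right comp_apply)
  also have "st PA (pr PA (U, bx U)) = (bx U, bx (bx U))" by simp
  also have "pst PA k (bx U, bx (bx U)) = ((bx ^^ k) (bx U), (bx ^^ Suc k) (bx U))"
    using Suc by simp
  also have "\<dots> = ((bx ^^ Suc k) U, (bx ^^ Suc (Suc k)) U)"
    by (simp only: funpow_Suc_right comp_apply)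
  finally show ?case .
qed

lemma PA_K2: "is_K2 PA"
  unfolding is_K2_def
proof (intro conjI PA_pmda ballI)
  fix x y assume x: "x \<in> carrier PA" and y: "y \<in> carrier PA"
  show "leq PA (mt PA x (pr PA (st PA (pr PA x)))) (jn PA y (st PA y))"
    by (auto simp: leq_PA)
  have "snd y \<subseteq> fst y" using y bx_sub by auto
  then show "leq PA (mt PA x (pr PA x)) (jn PA y (pr PA y))"
    using x bx_sub by (auto simp: leq_PA)
next
  fix x assume x: "x \<in> carrier PA"
  have "snd x \<subseteq> fst x" using x bx_sub by auto
  then have z: "mt PA x (st PA (pr PA x)) = (snd x, bx (snd x))"
    using bx_sub[of "snd x"] by auto
  show "pst PA 2 (mt PA x (st PA (pr PA x))) = pst PA 3 (mt PA x (st PA (pr PA x)))"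
    unfolding z pst_PA by (simp add: numeral_eq_Suc bx3)
qed

section \<open>Infinitely many one-generated elements\<close>

definition x0 :: "nat set \<times> nat set" where "x0 = ({0,1,2,3}, {2})"

fun E :: "nat \<Rightarrow> trm" where
  "E 0 = Star (Join (Star (Prime Var)) (Prime (Star (Star Var))))"
| "E (Suc 0) = Star (Prime Var)"
| "E (Suc (Suc n)) = Meet (Prime (Star (E (Suc n)))) (Star (Prime (Star (E n))))"

lemma bx_0123: "bx {0, Suc 0, 2, 3} = {Suc 0, 2}"
proof
  show "bx {0, Suc 0, 2, 3} \<subseteq> {Suc 0, 2}"
  proof
    fix i assume i: "i \<in> bx {0, Suc 0, 2, 3}"
    have "i \<noteq> 0"
    proof
      assume "i = 0"
      then have "{0, Suc 0, 2, 3::nat} = UNIV" using i bx_0 by simp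
      moreover have "(4::nat) \<notin> {0, Suc 0, 2, 3}" by simp
      ultimately show False by blast
    qed
    moreover have "adj i (Suc i)" by (simp add: adj_def)
    then have "Suc i \<in> {0, Suc 0, 2, 3}" using i by (auto simp: bx_def)
    ultimately show "i \<in> {Suc 0, 2}" by auto
  qed
  show "{Suc 0, 2} \<subseteq> bx {0, Suc 0, 2, 3}" by (auto simp: bx_def adj_def)
qed

lemma x0_carrier: "x0 \<in> carrier PA"
  by (simp add: x0_def bx_0123)

lemma E_val: "eval PA x0 (E n) = ({Suc n}, {})"
proof (induction n rule: E.induct)
  case 1
  have a: "- {0::nat,1,2,3} \<noteq> UNIV" by auto
  have b: "bx (- {0::nat, 1, 2, 3}) = {}" by (rule bx_no0) simp
  have c: "- insert 2 (- {Suc 0, 2::nat}) = {Suc 0}" by auto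
  show ?case by (simp add: x0_def b bx_0123 c bx_no0)
next
  case 2
  show ?case by (simp add: x0_def bx_no0)
next
  case (3 n)
  have s1: "- bx (- {Suc (Suc n)}) \<inter> bx (- {Suc n}) = {Suc (Suc (Suc n))}"
    unfolding bx_sing_compl by (auto simp: adj_def)
  have s2: "bx (bx (- {Suc n})) = {}" unfolding bx2 by auto
  show ?case using 3 by (simp add: s1 s2)
qed

lemma E_inf: "infinite (range (eval PA x0))"
proof
  assume fin: "finite (range (eval PA x0))"
  have "range (\<lambda>n. ({Suc n}, {} :: nat set)) \<subseteq> range (eval PA x0)"
    using E_val by (metis (no_types, lifting) image_subset_iff rangeI)
  moreover have "inj (\<lambda>n. ({Suc n}, {} :: nat set))" by (auto simp: inj_def)
  ultimately have "finite (UNIV :: nat set)" using fin finite_subset finite_imageD by blast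
  then show False by simp
qed

lemma free_inf:
  assumes "\<exists>A :: nat pmda. is_K2 A \<and> (\<exists>a\<in>carrier A. infinite {eval A a t | t. True})"
  shows "infinite free_K2_1"
proof
  assume fin: "finite free_K2_1"
  from assms obtain A :: "nat pmda" and a where K: "is_K2 A" and a: "a \<in> carrier A"
    and inf: "infinite {eval A a t | t. True}" by blast
  define r where "r = {(s, t). K2_eq s t}"
  define \<phi> where "\<phi> C = eval A a (SOME t. t \<in> C)" for C
  have eq: "K2_eq s t \<Longrightarrow> eval A a s = eval A a t" for s t
    using K a unfolding K2_eq_def by blast
  have "{eval A a t | t. True} \<subseteq> \<phi> ` free_K2_1"
  proof
    fix v assume "v \<in> {eval A a t | t. True}"
    then obtain t where v: "v = eval A a t" by blast
    have C: "r `` {t} \<in> free_K2_1" unfolding free_K2_1_def r_def by (rule quotientI) simp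
    have tin: "t \<in> r `` {t}" by (simp add: r_def K2_eq_def)
    then have "(SOME s. s \<in> r `` {t}) \<in> r `` {t}" by (rule someI)
    then have "K2_eq t (SOME s. s \<in> r `` {t})" by (simp add: r_def)
    then have "\<phi> (r `` {t}) = v" unfolding \<phi>_def v by (simp add: eq)
    then show "v \<in> \<phi> ` free_K2_1" using C by blast
  qed
  then show False using fin inf finite_subset by blast
qed

theorem theorem4p14:
  shows "(\<exists>A :: nat pmda. is_K2 A \<and>
            (\<exists>a\<in>carrier A. infinite {eval A a t | t. True}))
         \<and> infinite free_K2_1"
proof -
  define f where "f = eval PA x0"
  define S where "S = range f"
  define h where "h = (\<lambda>v. to_nat (inv f v))"
  have injh: "inj_on h S"
  proof
    fix v w assume v: "v \<in> S" and w: "w \<in> S" and e: "h v = h w"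
    then have "inv f v = inv f w" unfolding h_def by (simp add: inj_eq[OF inj_to_nat])
    then have "f (inv f v) = f (inv f w)" by simp
    then show "v = w" using v w unfolding S_def by (simp add: f_inv_into_f)
  qed
  have cl1: "bot PA \<in> S"
  proof -
    have "bot PA = f Zero" by (simp add: f_def)
    then show ?thesis unfolding S_def by blast
  qed
  have cl2: "top PA \<in> S"
  proof -
    have "top PA = f One" by (simp add: f_def)
    then show ?thesis unfolding S_def by blast
  qed
  have cl3: "mt PA x y \<in> S" if xy: "x \<in> S" "y \<in> S" for x y
  proof -
    obtain s t where "x = f s" "y = f t" using xy unfolding S_def by blast
    then have "mt PA x y = f (Meet s t)" by (simp add: f_def)
    then show ?thesis unfolding S_def by blast
  qed
  have cl4: "jn PA x y \<in> S" if xy: "x \<in> S" "y \<in> S" for x y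
  proof -
    obtain s t where "x = f s" "y = f t" using xy unfolding S_def by blast
    then have "jn PA x y = f (Join s t)" by (simp add: f_def)
    then show ?thesis unfolding S_def by blast
  qed
  have cl5: "st PA x \<in> S" if xy: "x \<in> S" for x
  proof -
    obtain s where "x = f s" using xy unfolding S_def by blast
    then have "st PA x = f (Star s)" by (simp add: f_def)
    then show ?thesis unfolding S_def by blast
  qed
  have cl6: "pr PA x \<in> S" if xy: "x \<in> S" for x
  proof -
    obtain s where "x = f s" using xy unfolding S_def by blast
    then have "pr PA x = f (Prime s)" by (simp add: f_def)
    then show ?thesis unfolding S_def by blast
  qed
  have sub: "S \<subseteq> carrier PA"
    unfolding S_def f_def using eval_in_carrier[OF PA_pmda x0_carrier] by blast
  interpret T: trloc PA S h
    using injh cl1 cl2 cl3 cl4 cl5 cl6 sub by unfold_locales auto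
  have K: "is_K2 (tr PA S h)" by (rule T.K2A[OF PA_K2])
  have x0S: "x0 \<in> S"
  proof -
    have "x0 = f Var" by (simp add: f_def)
    then show ?thesis unfolding S_def by blast
  qed
  have img: "{eval (tr PA S h) (h x0) t | t. True} = h ` S"
  proof -
    have "{eval (tr PA S h) (h x0) t | t. True} = {h (eval PA x0 t) | t. True}"
      using T.evalA[OF x0S] by simp
    also have "\<dots> = h ` S" unfolding S_def f_def by blast
    finally show ?thesis .
  qed
  have infS: "infinite S" unfolding S_def f_def by (rule E_inf)
  have "infinite (h ` S)" using infS injh finite_imageD by blast
  moreover have "h x0 \<in> carrier (tr PA S h)" using x0S by (simp add: tr_def)
  ultimately have P1: "\<exists>A :: nat pmda. is_K2 A \<and>
            (\<exists>a\<in>carrier A. infinite {eval A a t | t. True})"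
    using K img by metis
  then show ?thesis using free_inf by blast
qed

end
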